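(* Every surjective $\boxplus$-morphism $\phi:[1]^m\to[1]^n$ has a section in $\boxplus$, i.e. there is a $\boxplus$-morphism $s:[1]^n\to[1]^m$ with $\phi\circ s$ the identity.
   Context: $[1]=\{0<1\}$, $[1]^n$ the product poset ($[1]^0=[0]$). An interval in a poset is a non-empty subset $[x,z]=\{y:x\leq y\leq z\}$. $\boxplus$ is the category whose objects are the $[1]^n$ ($n\geq0$) and whose morphisms are the monotone functions mapping every interval onto an interval. *)

theory Defs
  imports Main
begin

text \<open>The poset [1]^n: bool lists of length n (False < True), ordered componentwise.
  [1]^0 is the one-point poset (the empty list).\<close>

definition cube :: "nat \<Rightarrow> bool list set" where
  "cube n = {xs. length xs = n}"

definition cle :: "bool list \<Rightarrow> bool list \<Rightarrow> bool" where
  "cle xs ys \<longleftrightarrow> list_all2 (\<le>) xs ys"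

definition cinterval :: "nat \<Rightarrow> bool list \<Rightarrow> bool list \<Rightarrow> bool list set" where
  "cinterval n x z = {y \<in> cube n. cle x y \<and> cle y z}"

definition is_interval :: "nat \<Rightarrow> bool list set \<Rightarrow> bool" where
  "is_interval n S \<longleftrightarrow> (\<exists>x\<in>cube n. \<exists>z\<in>cube n. cle x z \<and> S = cinterval n x z)"

definition box_mor :: "nat \<Rightarrow> nat \<Rightarrow> (bool list \<Rightarrow> bool list) \<Rightarrow> bool" where
  "box_mor m n f \<longleftrightarrow>
     (\<forall>x\<in>cube m. f x \<in> cube n) \<and>
     (\<forall>x\<in>cube m. \<forall>y\<in>cube m. cle x y \<longrightarrow> cle (f x) (f y)) \<and>
     (\<forall>x\<in>cube m. \<forall>z\<in>cube m. cle x z \<longrightarrow> is_interval n (f ` cinterval m x z))"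

end

theory Submission
  imports Defs
begin

lemma cle_iff: "cle xs ys \<longleftrightarrow> length xs = length ys \<and> (\<forall>i<length xs. xs!i \<longrightarrow> ys!i)"
  unfolding cle_def list_all2_conv_all_nth le_bool_def by auto

lemma cle_trans: "cle x y \<Longrightarrow> cle y z \<Longrightarrow> cle x z"
  by (auto simp: cle_iff)

lemma lift:
  assumes "box_mor m n f" "x\<in>cube m" "z \<in> cube m" "cle x z" "cle (f x) y" "cle y (f z)"
  shows "\<exists>w. w\<in>cube m \<and> cle x w \<and> cle w z \<and> f w = y"
proof -
  obtain a b where ab: "a\<in>cube n" "b\<in>cube n" "cle a b" "f ` cinterval m x z = cinterval n a b"
    using assms unfolding box_mor_def is_interval_def by blast
  have "x \<in> cinterval m x z" "z \<in> cinterval m x z" using assms by (auto simp: cinterval_def cle_iff)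
  hence "f x \<in> cinterval n a b" "f z \<in> cinterval n a b" using ab by blast+
  hence fx: "f x \<in> cube n" "cle a (f x)" "cle (f z) b" by (auto simp: cinterval_def)
  have "cle a y" using cle_trans[OF fx(2) assms(5)] .
  moreover have "cle y b" using cle_trans[OF assms(6) fx(3)] .
  moreover have "y \<in> cube n" using fx(1) assms(5) by (simp add: cube_def cle_iff)
  ultimately have "y \<in> cinterval n a b" by (simp add: cinterval_def)
  hence "y \<in> f ` cinterval m x z" using ab by simp
  thus ?thesis by (auto simp: cinterval_def)
qed

theorem mainTheorem10:
  fixes m n :: nat and phi :: "bool list \<Rightarrow> bool list"
  assumes "box_mor m n phi"
    and "phi ` cube m = cube n"
  shows "\<exists>s. box_mor n m s \<and> (\<forall>y\<in>cube n. phi (s y) = y)"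
proof -
  have mc: "\<And>x. x \<in> cube m \<Longrightarrow> phi x \<in> cube n" using assms(1) unfolding box_mor_def by blast
  have mono: "\<And>x y. x \<in> cube m \<Longrightarrow> y \<in> cube m \<Longrightarrow> cle x y \<Longrightarrow> cle (phi x) (phi y)"
    using assms(1) unfolding box_mor_def by blast
  define zero where "zero = replicate n False"
  define wt where "wt x = card {i. i < length x \<and> x!i}" for x :: "bool list"
  have "zero \<in> cube n" by (simp add: zero_def cube_def)
  hence "zero \<in> phi ` cube m" using assms(2) by simp
  then obtain x0 where x0': "zero = phi x0" "x0 \<in> cube m" by (rule imageE)
  hence x0: "x0 \<in> cube m" "phi x0 = zero" by simp_all
  have "\<exists>c. (c \<in> cube m \<and> phi c = zero) \<and> (\<forall>y. (y \<in> cube m \<and> phi y = zero) \<longrightarrow> wt y \<le> wt c)"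
  proof (rule Lattices_Big.ex_has_greatest_nat[where b="Suc m"])
    show "x0 \<in> cube m \<and> phi x0 = zero" using x0 by blast
    show "\<forall>y. y \<in> cube m \<and> phi y = zero \<longrightarrow> wt y < Suc m"
    proof (intro allI impI)
      fix y assume "y \<in> cube m \<and> phi y = zero"
      have "wt y \<le> card {i. i < length y}" unfolding wt_def by (rule card_mono) auto
      thus "wt y < Suc m" using \<open>y \<in> cube m \<and> phi y = zero\<close> by (simp add: cube_def)
    qed
  qed
  then obtain c where c: "c \<in> cube m" "phi c = zero"
    and cmax: "\<And>y. y \<in> cube m \<Longrightarrow> phi y = zero \<Longrightarrow> wt y \<le> wt c" by blast
  have lc: "length c = m" using c by (simp add: cube_def)
  have nz: "phi (c[i:=True]) \<noteq> zero" if "i < m" "\<not> c!i" for i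
  proof
    assume h: "phi (c[i:=True]) = zero"
    have "c[i:=True] \<in> cube m" using c by (simp add: cube_def)
    hence le: "wt (c[i:=True]) \<le> wt c" using cmax h by blast
    have "{k. k < length (c[i:=True]) \<and> c[i:=True]!k} = insert i {k. k < length c \<and> c!k}"
      using that lc by (auto simp: nth_list_update)
    hence "wt (c[i:=True]) = Suc (wt c)" using that unfolding wt_def by simp
    thus False using le by simp
  qed
  define e where "e j = zero[j:=True]" for j
  have e_cube: "e j \<in> cube n" for j by (simp add: e_def zero_def cube_def)
  have e_nth: "j < n \<Longrightarrow> k < n \<Longrightarrow> e j ! k = (k = j)" for j k
    by (simp add: e_def zero_def nth_list_update)
  have claim: "\<exists>i<m. \<not>c!i \<and> x!i \<and> phi (c[i:=True]) ! j"
    if "x \<in> cube m" "cle c x" "j < n" "phi x ! j" for x j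
    using that
  proof (induction "card {i. i<m \<and> x!i \<and> \<not>c!i}" arbitrary: x rule: less_induct)
    case less
    show ?case
    proof (rule ccontr)
      assume no: "\<not> ?case"
      have px: "phi x \<in> cube n" using mc less.prems by blast
      have "cle (phi c) (e j)" using c e_cube by (simp add: cle_iff zero_def cube_def)
      moreover have "cle (e j) (phi x)" using px less.prems e_nth
        by (auto simp: cle_iff cube_def e_def zero_def)
      ultimately obtain w where w: "w \<in> cube m" "cle c w" "cle w x" "phi w = e j"
        using lift[OF assms(1) c(1) less.prems(1,2)] by blast
      show False
      proof (cases "w = x")
        case True
        have "x \<noteq> c" using True w(4) c(2) e_nth[of j j] less.prems(3)
          by (metis zero_def nth_replicate)
        have "\<exists>i<m. x!i \<and> \<not> c!i"
        proof (rule ccontr)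
          assume "\<not> (\<exists>i<m. x!i \<and> \<not> c!i)"
          hence "x = c" using less.prems(1,2) lc by (intro nth_equalityI) (auto simp: cle_iff cube_def)
          thus False using \<open>x \<noteq> c\<close> by simp
        qed
        then obtain i where i: "i < m" "x!i" "\<not> c!i" by blast
        let ?v = "phi (c[i:=True])"
        have ci: "c[i:=True] \<in> cube m" using c by (simp add: cube_def)
        have "cle (c[i:=True]) x" using less.prems(1,2) i lc
          by (auto simp: cle_iff nth_list_update)
        hence "cle ?v (e j)" using mono[OF ci less.prems(1)] True w(4) by simp
        moreover have "?v \<noteq> zero" using nz i by blast
        moreover have "?v \<in> cube n" using mc ci by blast
        moreover have "\<exists>k<n. ?v!k"
        proof (rule ccontr)
          assume "\<not> (\<exists>k<n. ?v!k)"
          hence "?v = zero" using \<open>?v \<in> cube n\<close> by (intro nth_equalityI) (auto simp: cube_def zero_def)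
          thus False using \<open>?v \<noteq> zero\<close> by simp
        qed
        ultimately obtain k where "k < n" "?v!k" "e j ! k"
          using e_cube[of j] by (auto simp: cle_iff cube_def)
        hence "?v ! j" using e_nth less.prems(3) by auto
        thus False using no i by blast
      next
        case False
        have lw: "length w = m" "length x = m" using w less.prems by (auto simp: cube_def)
        have "\<exists>i<m. x!i \<and> \<not> w!i"
        proof (rule ccontr)
          assume "\<not> (\<exists>i<m. x!i \<and> \<not> w!i)"
          hence "w = x" using w(3) lw by (intro nth_equalityI) (auto simp: cle_iff)
          thus False using False by simp
        qed
        then obtain i where i: "i < m" "x!i" "\<not> w!i" by blast
        have "{i. i<m \<and> w!i \<and> \<not>c!i} \<subset> {i. i<m \<and> x!i \<and> \<not>c!i}"
        proof
          show "{i. i<m \<and> w!i \<and> \<not>c!i} \<subseteq> {i. i<m \<and> x!i \<and> \<not>c!i}"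
            using w(3) lw by (auto simp: cle_iff)
          have "\<not> c!i" using w(2) i lc by (auto simp: cle_iff)
          thus "{i. i<m \<and> w!i \<and> \<not>c!i} \<noteq> {i. i<m \<and> x!i \<and> \<not>c!i}" using i by blast
        qed
        hence "card {i. i<m \<and> w!i \<and> \<not>c!i} < card {i. i<m \<and> x!i \<and> \<not>c!i}"
          by (rule psubset_card_mono[rotated]) simp
        moreover have "phi w ! j" using w(4) e_nth less.prems(3) by simp
        ultimately obtain i' where "i'<m" "\<not>c!i'" "w!i'" "phi (c[i':=True]) ! j"
          using less.hyps w(1,2) less.prems(3) by blast
        moreover have "x!i'" using w(3) lw \<open>i'<m\<close> \<open>w!i'\<close> by (auto simp: cle_iff)
        ultimately show False using no by blast
      qed
    qed
  qed
  have single: "j = k" if "i<m" "\<not>c!i" "j<n" "k<n" "phi(c[i:=True])!j" "phi(c[i:=True])!k" for i j k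
  proof (rule ccontr)
    assume jk: "j \<noteq> k"
    have ci: "c[i:=True] \<in> cube m" using c by (simp add: cube_def)
    have cc: "cle c (c[i:=True])" using lc that(1) by (auto simp: cle_iff nth_list_update)
    have pv: "phi (c[i:=True]) \<in> cube n" using mc ci by blast
    have "cle (phi c) (e j)" using c e_cube by (simp add: cle_iff zero_def cube_def)
    moreover have "cle (e j) (phi (c[i:=True]))" using pv that e_nth
      by (auto simp: cle_iff cube_def e_def zero_def)
    ultimately obtain w where w: "w \<in> cube m" "cle c w" "cle w (c[i:=True])" "phi w = e j"
      using lift[OF assms(1) c(1) ci cc] by blast
    have "w = c \<or> w = c[i:=True]"
    proof (cases "w!i")
      case True
      have "w = c[i:=True]" using w lc True that(1)
        by (intro nth_equalityI) (auto simp: cle_iff cube_def nth_list_update split: if_splits)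
      thus ?thesis ..
    next
      case False
      have "w = c" using w lc False that(1)
        by (intro nth_equalityI) (auto simp: cle_iff cube_def nth_list_update split: if_splits)
      thus ?thesis ..
    qed
    moreover have "phi c \<noteq> e j" using c(2) e_nth[of j j] that(3) by (metis zero_def nth_replicate)
    moreover have "phi (c[i:=True]) \<noteq> e j" using e_nth[of j k] that jk by auto
    ultimately show False using w(4) by blast
  qed
  define one where "one = replicate m True"
  have one: "one \<in> cube m" by (simp add: one_def cube_def)
  have "replicate n True \<in> cube n" by (simp add: cube_def)
  hence "replicate n True \<in> phi ` cube m" using assms(2) by simp
  then obtain x1 where x1': "replicate n True = phi x1" "x1 \<in> cube m" by (rule imageE)
  hence x1: "x1 \<in> cube m" "phi x1 = replicate n True" by simp_all
  have "cle x1 one" using x1 by (auto simp: one_def cle_iff cube_def)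
  hence "cle (replicate n True) (phi one)" using mono[OF x1(1) one] x1 by simp
  hence pone: "j < n \<Longrightarrow> phi one ! j" for j by (auto simp: cle_iff)
  have cone: "cle c one" using lc by (auto simp: one_def cle_iff)
  have ex: "\<exists>i. i<m \<and> \<not>c!i \<and> phi (c[i:=True]) ! j" if "j < n" for j
    using claim[OF one cone that pone[OF that]] by blast
  define pi where "pi j = (SOME i. i<m \<and> \<not>c!i \<and> phi (c[i:=True]) ! j)" for j
  have pi: "pi j < m \<and> \<not> c!(pi j) \<and> phi (c[pi j:=True]) ! j" if "j < n" for j
    unfolding pi_def by (rule someI_ex[OF ex[OF that]])
  have pi_inj: "j = j'" if "j<n" "j'<n" "pi j = pi j'" for j j'
    using single[of "pi j" j j'] pi[OF that(1)] pi[OF that(2)] that by auto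
  define s where "s y = map (\<lambda>i. c!i \<or> (\<exists>j<n. pi j = i \<and> y!j)) [0..<m]" for y
  have ls: "length (s y) = m" for y by (simp add: s_def)
  have snth: "i < m \<Longrightarrow> s y ! i = (c!i \<or> (\<exists>j<n. pi j = i \<and> y!j))" for i y
    by (simp add: s_def)
  have smono: "cle (s y) (s z)" if "y \<in> cube n" "z \<in> cube n" "cle y z" for y z
    using that by (auto simp: cle_iff ls snth cube_def)
  have sec: "phi (s y) = y" if "y \<in> cube n" for y
  proof -
    have sy: "s y \<in> cube m" by (simp add: cube_def ls)
    have cs: "cle c (s y)" using lc by (auto simp: cle_iff ls snth)
    have lp: "length (phi (s y)) = n" using mc[OF sy] by (simp add: cube_def)
    show ?thesis
    proof (rule nth_equalityI)
      show "length (phi (s y)) = length y" using lp that by (simp add: cube_def)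
      fix j assume "j < length (phi (s y))"
      hence j: "j < n" using lp by simp
      show "phi (s y) ! j = y ! j"
      proof (cases "y!j")
        case True
        have ci: "c[pi j:=True] \<in> cube m" using c by (simp add: cube_def)
        have "cle (c[pi j:=True]) (s y)" using lc j True pi[OF j]
          by (auto simp: cle_iff ls snth nth_list_update)
        hence "cle (phi (c[pi j:=True])) (phi (s y))" using mono[OF ci sy] by simp
        thus ?thesis using pi[OF j] True j mc[OF ci] by (auto simp: cle_iff cube_def)
      next
        case False
        show ?thesis
        proof (rule ccontr)
          assume "phi (s y) ! j \<noteq> y ! j"
          hence "phi (s y) ! j" using False by simp
          then obtain i where i: "i<m" "\<not>c!i" "s y!i" "phi (c[i:=True]) ! j"
            using claim[OF sy cs j] by blast
          then obtain j' where j': "j'<n" "pi j' = i" "y!j'" using snth by auto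
          have "j' = j" using single[of i j' j] pi[OF j'(1)] j'(2) i j j'(1) by blast
          thus False using j' False by simp
        qed
      qed
    qed
  qed
  have bm: "box_mor n m s"
    unfolding box_mor_def
  proof (intro conjI ballI impI)
    show "\<And>x. s x \<in> cube m" by (simp add: cube_def ls)
    show "\<And>x y. x \<in> cube n \<Longrightarrow> y \<in> cube n \<Longrightarrow> cle x y \<Longrightarrow> cle (s x) (s y)" by (rule smono)
    fix y z assume yz: "y \<in> cube n" "z \<in> cube n" "cle y z"
    have "s ` cinterval n y z = cinterval m (s y) (s z)"
    proof
      show "s ` cinterval n y z \<subseteq> cinterval m (s y) (s z)"
        using smono yz by (auto simp: cinterval_def cube_def ls)
      show "cinterval m (s y) (s z) \<subseteq> s ` cinterval n y z"
      proof
        fix w assume "w \<in> cinterval m (s y) (s z)"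
        hence w: "length w = m" "cle (s y) w" "cle w (s z)" by (auto simp: cinterval_def cube_def)
        define v where "v = map (\<lambda>j. w ! pi j) [0..<n]"
        have lv: "length v = n" by (simp add: v_def)
        have "cle y v" using yz w pi
          by (auto simp: cle_iff cube_def v_def ls snth)
        moreover have "cle v z"
        proof -
          have "z!j" if j: "j<n" "w!(pi j)" for j
          proof -
            have "s z ! (pi j)" using w j pi[OF j(1)] by (auto simp: cle_iff)
            then obtain j' where "j'<n" "pi j' = pi j" "z!j'" using snth pi[OF j(1)] by auto
            thus ?thesis using pi_inj j by metis
          qed
          thus ?thesis using yz by (auto simp: cle_iff cube_def v_def)
        qed
        moreover have "s v = w"
        proof (rule nth_equalityI)
          show "length (s v) = length w" using ls w by simp
          fix i assume "i < length (s v)"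
          hence i: "i < m" using ls by simp
          have "w!i \<Longrightarrow> s v ! i"
          proof -
            assume wi: "w!i"
            show ?thesis
            proof (cases "c!i")
              case True thus ?thesis using snth i by simp
            next
              case False
              have "s z ! i" using w wi i by (auto simp: cle_iff)
              then obtain j where "j<n" "pi j = i" using False snth i by auto
              thus ?thesis using snth i wi by (auto simp: v_def)
            qed
          qed
          moreover have "s v ! i \<Longrightarrow> w!i"
          proof -
            assume "s v ! i"
            hence "c!i \<or> (\<exists>j<n. pi j = i \<and> v!j)" using snth i by simp
            moreover have "c!i \<Longrightarrow> w!i" using w i snth[OF i, of y] by (auto simp: cle_iff)
            ultimately show "w!i" by (auto simp: v_def)
          qed
          ultimately show "s v ! i = w ! i" by blast
        qed
        ultimately show "w \<in> s ` cinterval n y z" using lv by (auto simp: cinterval_def cube_def)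
      qed
    qed
    moreover have "s y \<in> cube m" "s z \<in> cube m" by (simp_all add: cube_def ls)
    ultimately show "is_interval m (s ` cinterval n y z)"
      unfolding is_interval_def using smono[OF yz] by blast
  qed
  have "box_mor n m s \<and> (\<forall>y\<in>cube n. phi (s y) = y)"
    using bm sec by simp
  thus ?thesis by (rule exI[where x=s])
qed

end
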